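(* Let $M$ be a finite set of alternatives, $\mathcal{R}$ the set of weak preference orders on $M$, and $\varphi:\mathcal{R}\to\Delta(M)$ a mechanism. If $\varphi$ is multi-separation strategyproof, then it is strategyproof.
   Context: A preference order is a complete, transitive relation $R$ on $M$; $a\,I\,b$ means $a\,R\,b$ and $b\,R\,a$; $a\,P\,b$ means $a\,R\,b$ and not $b\,R\,a$. Write $R$ as $M_1\,P\,\cdots\,P\,M_K$ where $(M_k)$ are the nonempty indifference classes ordered so that $a\,P\,b$ for $a\in M_k$, $b\in M_{k'}$, $k<k'$. A lottery $x\in\Delta(M)$ first order-stochastically dominates $y$ at $R$ if $\sum_{j: j R a}x_j\ge\sum_{j: j R a}y_j$ for all $a\in M$. $\varphi$ is strategyproof if $\varphi(R)$ first order-stochastically dominates $\varphi(R')$ at $R$ for all $R,R'\in\mathcal{R}$. A multi-separation is a pair $(R,R')$ such that, with $R=M_1\,P\,\cdots\,P\,M_K$, there are integers $L_1,\dots,L_K\ge1$ and, for each $k$, a partition of $M_k$ into pairwise disjoint nonempty sets $M_k^1,\dots,M_k^{L_k}$ with $R'=M_1^1\,P'\,\cdots\,P'\,M_1^{L_1}\,P'\,M_2^1\,P'\,\cdots\,P'\,M_K^1\,P'\,\cdots\,P'\,M_K^{L_K}$ (indifference within each listed set). $\varphi$ is multi-separation strategyproof if for every multi-separation $(R,R')$, $\varphi(R)$ first order-stochastically dominates $\varphi(R')$ at $R$ and $\varphi(R')$ first order-stochastically dominates $\varphi(R)$ at $R'$. *)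

theory Defs
  imports Complex_Main
begin

definition preference :: "'a set \<Rightarrow> 'a rel \<Rightarrow> bool" where
  "preference M R \<longleftrightarrow> R \<subseteq> M \<times> M \<and>
     (\<forall>a\<in>M. \<forall>b\<in>M. (a, b) \<in> R \<or> (b, a) \<in> R) \<and> trans R"

definition prefs :: "'a set \<Rightarrow> 'a rel set" where
  "prefs M = {R. preference M R}"

definition lotteries :: "'a set \<Rightarrow> ('a \<Rightarrow> real) set" where
  "lotteries M = {x. (\<forall>a\<in>M. x a \<ge> 0) \<and> (\<forall>a. a \<notin> M \<longrightarrow> x a = 0) \<and> sum x M = 1}"

definition sd_dom :: "'a set \<Rightarrow> 'a rel \<Rightarrow> ('a \<Rightarrow> real) \<Rightarrow> ('a \<Rightarrow> real) \<Rightarrow> bool" where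
  "sd_dom M R x y \<longleftrightarrow>
     (\<forall>a\<in>M. sum x {j\<in>M. (j, a) \<in> R} \<ge> sum y {j\<in>M. (j, a) \<in> R})"

definition strategyproof :: "'a set \<Rightarrow> ('a rel \<Rightarrow> ('a \<Rightarrow> real)) \<Rightarrow> bool" where
  "strategyproof M \<phi> \<longleftrightarrow>
     (\<forall>R\<in>prefs M. \<forall>R'\<in>prefs M. sd_dom M R (\<phi> R) (\<phi> R'))"

definition ordered_partition :: "'a set \<Rightarrow> 'a set list \<Rightarrow> bool" where
  "ordered_partition S Ms \<longleftrightarrow>
     (\<forall>k<length Ms. Ms ! k \<noteq> {}) \<and>
     (\<forall>k<length Ms. \<forall>l<length Ms. k \<noteq> l \<longrightarrow> Ms ! k \<inter> Ms ! l = {}) \<and>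
     \<Union>(set Ms) = S"

definition pref_of_list :: "'a set list \<Rightarrow> 'a rel" where
  "pref_of_list Ms = {(a, b). \<exists>k<length Ms. \<exists>l<length Ms. k \<le> l \<and> a \<in> Ms ! k \<and> b \<in> Ms ! l}"

definition multi_separation :: "'a set \<Rightarrow> 'a rel \<Rightarrow> 'a rel \<Rightarrow> bool" where
  "multi_separation M R R' \<longleftrightarrow>
     (\<exists>Ms Ls. ordered_partition M Ms \<and> R = pref_of_list Ms \<and>
        length Ls = length Ms \<and>
        (\<forall>k<length Ms. ordered_partition (Ms ! k) (Ls ! k) \<and> Ls ! k \<noteq> []) \<and>
        R' = pref_of_list (concat Ls))"

definition multi_separation_strategyproof :: "'a set \<Rightarrow> ('a rel \<Rightarrow> ('a \<Rightarrow> real)) \<Rightarrow> bool" where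
  "multi_separation_strategyproof M \<phi> \<longleftrightarrow>
     (\<forall>R R'. multi_separation M R R' \<longrightarrow>
        sd_dom M R (\<phi> R) (\<phi> R') \<and> sd_dom M R' (\<phi> R') (\<phi> R))"

end

theory Submission
  imports Defs
begin

fun disj :: "'a set list \<Rightarrow> bool" where
  "disj [] = True"
| "disj (D # Ds) = (D \<inter> \<Union>(set Ds) = {} \<and> disj Ds)"

lemma disj_append[simp]:
  "disj (xs @ ys) \<longleftrightarrow> disj xs \<and> disj ys \<and> \<Union>(set xs) \<inter> \<Union>(set ys) = {}"
  by (induction xs) auto

lemma disj_filter: "disj xs \<Longrightarrow> disj (filter P xs)"
  by (induction xs) auto

lemma disj_concat:
  "disj (map (\<lambda>L. \<Union>(set L)) Ls) \<Longrightarrow> \<forall>L\<in>set Ls. disj L \<Longrightarrow> disj (concat Ls)"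
  by (induction Ls) auto

lemma disj_nth: "disj Ms \<longleftrightarrow> (\<forall>k<length Ms. \<forall>l<length Ms. k \<noteq> l \<longrightarrow> Ms!k \<inter> Ms!l = {})"
proof (induction Ms)
  case Nil
  then show ?case by simp
next
  case (Cons D Ds)
  show ?case
  proof
    assume h: "disj (D#Ds)"
    show "\<forall>k<length (D#Ds). \<forall>l<length (D#Ds). k \<noteq> l \<longrightarrow> (D#Ds)!k \<inter> (D#Ds)!l = {}"
    proof (intro allI impI)
      fix k l assume kl: "k < length (D#Ds)" "l < length (D#Ds)" "k\<noteq>l"
      show "(D#Ds)!k \<inter> (D#Ds)!l = {}"
      proof (cases k)
        case 0
        then obtain l' where "l = Suc l'" using kl by (cases l) auto
        moreover have "Ds!l' \<in> set Ds" using kl \<open>l = Suc l'\<close> by simp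
        ultimately show ?thesis using 0 h by auto
      next
        case (Suc k')
        show ?thesis
        proof (cases l)
          case 0
          moreover have "Ds!k' \<in> set Ds" using kl Suc by simp
          ultimately show ?thesis using Suc h by auto
        next
          case (Suc l')
          then show ?thesis using \<open>k = Suc k'\<close> h kl Cons.IH by auto
        qed
      qed
    qed
  next
    assume h: "\<forall>k<length (D#Ds). \<forall>l<length (D#Ds). k \<noteq> l \<longrightarrow> (D#Ds)!k \<inter> (D#Ds)!l = {}"
    have 1: "D \<inter> \<Union>(set Ds) = {}"
    proof -
      { fix x E assume "x \<in> D" "E \<in> set Ds" "x \<in> E"
        then obtain l where "l < length Ds" "Ds!l = E" by (auto simp: in_set_conv_nth)
        then have False using h[rule_format, of 0 "Suc l"] \<open>x \<in> D\<close> \<open>x \<in> E\<close> by auto }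
      then show ?thesis by blast
    qed
    have 2: "disj Ds"
      using Cons.IH h by (metis Suc_less_eq length_Cons nat.inject nth_Cons_Suc)
    show "disj (D#Ds)" using 1 2 by simp
  qed
qed

lemma ordered_partition_iff:
  "ordered_partition S Ms \<longleftrightarrow> (\<forall>D\<in>set Ms. D \<noteq> {}) \<and> disj Ms \<and> \<Union>(set Ms) = S"
  unfolding ordered_partition_def disj_nth by (auto simp: all_set_conv_all_nth)

lemma pref_Nil[simp]: "pref_of_list [] = {}"
  by (simp add: pref_of_list_def)

lemma pref_Cons: "pref_of_list (D # Ds) = D \<times> (D \<union> \<Union>(set Ds)) \<union> pref_of_list Ds"
proof (intro set_eqI iffI)
  fix p assume "p \<in> pref_of_list (D # Ds)"
  then obtain a b k l where p: "p = (a,b)" "k < length (D#Ds)" "l < length (D#Ds)" "k \<le> l"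
    "a \<in> (D#Ds)!k" "b \<in> (D#Ds)!l" unfolding pref_of_list_def by auto
  show "p \<in> D \<times> (D \<union> \<Union>(set Ds)) \<union> pref_of_list Ds"
  proof (cases k)
    case 0
    then show ?thesis using p by (cases l) (auto simp: nth_mem)
  next
    case (Suc k')
    then obtain l' where "l = Suc l'" using p by (cases l) auto
    then show ?thesis using p Suc unfolding pref_of_list_def by auto
  qed
next
  fix p assume "p \<in> D \<times> (D \<union> \<Union>(set Ds)) \<union> pref_of_list Ds"
  then show "p \<in> pref_of_list (D # Ds)"
  proof (elim UnE)
    assume "p \<in> D \<times> (D \<union> \<Union>(set Ds))"
    then obtain a b where ab: "p = (a,b)" "a \<in> D" "b \<in> D \<or> b \<in> \<Union>(set Ds)" by auto
    then show ?thesis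
    proof (elim disjE)
      assume "b \<in> D"
      then have "0 < length (D#Ds) \<and> 0 \<le> (0::nat) \<and> a \<in> (D#Ds)!0 \<and> b \<in> (D#Ds)!0"
        using ab by simp
      then show ?thesis using ab unfolding pref_of_list_def by blast
    next
      assume "b \<in> \<Union>(set Ds)"
      then obtain l where "l < length Ds" "b \<in> Ds!l" by (auto simp: in_set_conv_nth)
      then have "0 < length (D#Ds) \<and> Suc l < length (D#Ds) \<and> 0 \<le> Suc l \<and> a \<in> (D#Ds)!0 \<and> b \<in> (D#Ds)!(Suc l)"
        using ab by simp
      then show ?thesis using ab unfolding pref_of_list_def by blast
    qed
  next
    assume "p \<in> pref_of_list Ds"
    then obtain a b k l where p: "p = (a,b)" "k < length Ds" "l < length Ds" "k \<le> l"
      "a \<in> Ds!k" "b \<in> Ds!l" unfolding pref_of_list_def by auto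
    then have "Suc k < length (D#Ds) \<and> Suc l < length (D#Ds) \<and> Suc k \<le> Suc l \<and> a \<in> (D#Ds)!Suc k \<and> b \<in> (D#Ds)!(Suc l)"
      by simp
    then show ?thesis using p unfolding pref_of_list_def by blast
  qed
qed

lemma pref_append:
  "pref_of_list (xs @ ys) = pref_of_list xs \<union> pref_of_list ys \<union> \<Union>(set xs) \<times> \<Union>(set ys)"
  by (induction xs) (auto simp: pref_Cons)

lemma pref_sub: "pref_of_list xs \<subseteq> \<Union>(set xs) \<times> \<Union>(set xs)"
  by (induction xs) (auto simp: pref_Cons)

lemma pref_filter: "pref_of_list (filter (\<lambda>D. D \<noteq> {}) xs) = pref_of_list xs"
  by (induction xs) (auto simp: pref_Cons)

lemma upper:
  assumes "disj (P @ D # Q)" "a \<in> D"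
  shows "{j. (j, a) \<in> pref_of_list (P @ D # Q)} = \<Union>(set P) \<union> D"
  using assms pref_append[of P "D#Q"] pref_Cons[of D Q] pref_sub[of P] pref_sub[of Q]
  by auto


lemma sd_prefix:
  assumes "finite M" "disj Ms" "\<Union>(set Ms) = M" "sd_dom M (pref_of_list Ms) x y"
  shows "Ms = P @ Q \<Longrightarrow> sum y (\<Union>(set P)) \<le> sum x (\<Union>(set P))"
proof (induction P arbitrary: Q rule: rev_induct)
  case Nil
  then show ?case by simp
next
  case (snoc D P0)
  show ?case
  proof (cases "D = {}")
    case True
    then show ?thesis using snoc.IH[of "D # Q"] snoc.prems by simp
  next
    case False
    then obtain a where a: "a \<in> D" by blast
    have ms: "Ms = P0 @ D # Q" using snoc.prems by simp
    have aM: "a \<in> M" using a ms assms(3) by auto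
    have eq: "{j \<in> M. (j, a) \<in> pref_of_list Ms} = \<Union>(set P0) \<union> D"
    proof -
      have "{j \<in> M. (j, a) \<in> pref_of_list Ms} = M \<inter> {j. (j, a) \<in> pref_of_list Ms}" by auto
      also have "\<dots> = \<Union>(set P0) \<union> D" using upper[of P0 D Q a] assms(2,3) ms a by auto
      finally show ?thesis .
    qed
    have "sum y {j \<in> M. (j, a) \<in> pref_of_list Ms} \<le> sum x {j \<in> M. (j, a) \<in> pref_of_list Ms}"
      using assms(4) aM unfolding sd_dom_def by blast
    then have "sum y (\<Union>(set P0) \<union> D) \<le> sum x (\<Union>(set P0) \<union> D)" unfolding eq .
    then show ?thesis by (simp add: Un_commute)
  qed
qed

lemma ms_gen:
  assumes "multi_separation_strategyproof M \<phi>" "disj (map (\<lambda>L. \<Union>(set L)) Ls)"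
    "\<forall>L\<in>set Ls. disj L" "\<Union>(set (concat Ls)) = M"
  shows "sd_dom M (pref_of_list (map (\<lambda>L. \<Union>(set L)) Ls))
           (\<phi> (pref_of_list (map (\<lambda>L. \<Union>(set L)) Ls))) (\<phi> (pref_of_list (concat Ls)))
       \<and> sd_dom M (pref_of_list (concat Ls))
           (\<phi> (pref_of_list (concat Ls))) (\<phi> (pref_of_list (map (\<lambda>L. \<Union>(set L)) Ls)))"
proof -
  define Ls' where "Ls' = filter (\<lambda>L. L \<noteq> []) (map (filter (\<lambda>E. E \<noteq> {})) Ls)"
  have e1: "map (\<lambda>L. \<Union>(set L)) Ls' = filter (\<lambda>D. D \<noteq> {}) (map (\<lambda>L. \<Union>(set L)) Ls)"
    unfolding Ls'_def by (induction Ls) (auto simp: filter_empty_conv)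
  have e2: "concat Ls' = filter (\<lambda>E. E \<noteq> {}) (concat Ls)"
    unfolding Ls'_def by (induction Ls) auto
  have un1: "\<Union>(set (map (\<lambda>L. \<Union>(set L)) Ls)) = M" using assms(4) by auto
  have setLs': "\<forall>L\<in>set Ls'. L \<noteq> [] \<and> (\<forall>E\<in>set L. E \<noteq> {}) \<and> disj L"
    unfolding Ls'_def using assms(3) by (auto intro: disj_filter)
  have "multi_separation M (pref_of_list (map (\<lambda>L. \<Union>(set L)) Ls)) (pref_of_list (concat Ls))"
    unfolding multi_separation_def
  proof (intro exI conjI)
    show "ordered_partition M (map (\<lambda>L. \<Union>(set L)) Ls')"
      unfolding ordered_partition_iff e1 using disj_filter[OF assms(2)] un1 by auto
    show "pref_of_list (map (\<lambda>L. \<Union>(set L)) Ls) = pref_of_list (map (\<lambda>L. \<Union>(set L)) Ls')"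
      unfolding e1 pref_filter ..
    show "length Ls' = length (map (\<lambda>L. \<Union>(set L)) Ls')" by simp
    show "\<forall>k<length (map (\<lambda>L. \<Union>(set L)) Ls'). ordered_partition (map (\<lambda>L. \<Union>(set L)) Ls' ! k) (Ls' ! k) \<and> Ls' ! k \<noteq> []"
    proof (intro allI impI)
      fix k assume "k < length (map (\<lambda>L. \<Union>(set L)) Ls')"
      then have "Ls'!k \<in> set Ls'" "k < length Ls'" by auto
      then show "ordered_partition (map (\<lambda>L. \<Union>(set L)) Ls' ! k) (Ls' ! k) \<and> Ls' ! k \<noteq> []"
        using setLs' unfolding ordered_partition_iff by auto
    qed
    show "pref_of_list (concat Ls) = pref_of_list (concat Ls')"
      unfolding e2 pref_filter ..
  qed
  then show ?thesis using assms(1) unfolding multi_separation_strategyproof_def by blast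
qed

lemma block_facts:
  assumes fin: "finite M" and ms: "multi_separation_strategyproof M \<phi>"
    and C: "map (\<lambda>L. \<Union>(set L)) Ls = C" and F: "concat Ls = F"
    and dj: "disj C" and djL: "\<forall>L\<in>set Ls. disj L" and un: "\<Union>(set F) = M"
  shows "Ls = Pb @ L # Qb \<Longrightarrow> L = E1 @ E2 \<Longrightarrow>
      sum (\<phi> (pref_of_list C)) (\<Union>(set (concat Pb)) \<union> \<Union>(set E1))
      \<le> sum (\<phi> (pref_of_list F)) (\<Union>(set (concat Pb)) \<union> \<Union>(set E1))"
    and "Ls = Pb @ Qb \<Longrightarrow>
      sum (\<phi> (pref_of_list C)) (\<Union>(set (concat Pb))) = sum (\<phi> (pref_of_list F)) (\<Union>(set (concat Pb)))"
proof -
  have sd: "sd_dom M (pref_of_list C) (\<phi> (pref_of_list C)) (\<phi> (pref_of_list F))"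
       "sd_dom M (pref_of_list F) (\<phi> (pref_of_list F)) (\<phi> (pref_of_list C))"
    using ms_gen[OF ms, of Ls] C F dj djL un by auto
  have djF: "disj F" using disj_concat[of Ls] C F dj djL by auto
  have unC: "\<Union>(set C) = M" using C F un by (auto; blast)
  show "sum (\<phi> (pref_of_list C)) (\<Union>(set (concat Pb)) \<union> \<Union>(set E1))
      \<le> sum (\<phi> (pref_of_list F)) (\<Union>(set (concat Pb)) \<union> \<Union>(set E1))"
    if "Ls = Pb @ L # Qb" "L = E1 @ E2"
  proof -
    have "F = (concat Pb @ E1) @ (E2 @ concat Qb)" using that F by simp
    from sd_prefix[OF fin djF un sd(2) this] show ?thesis by simp
  qed
  show "sum (\<phi> (pref_of_list C)) (\<Union>(set (concat Pb))) = sum (\<phi> (pref_of_list F)) (\<Union>(set (concat Pb)))"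
    if "Ls = Pb @ Qb"
  proof -
    have "F = concat Pb @ concat Qb" using that F by simp
    from sd_prefix[OF fin djF un sd(2) this]
    have 1: "sum (\<phi> (pref_of_list C)) (\<Union>(set (concat Pb))) \<le> sum (\<phi> (pref_of_list F)) (\<Union>(set (concat Pb)))" .
    have "C = map (\<lambda>L. \<Union>(set L)) Pb @ map (\<lambda>L. \<Union>(set L)) Qb" using that C by simp
    from sd_prefix[OF fin dj unC sd(1) this]
    have 2: "sum (\<phi> (pref_of_list F)) (\<Union>(set (map (\<lambda>L. \<Union>(set L)) Pb))) \<le> sum (\<phi> (pref_of_list C)) (\<Union>(set (map (\<lambda>L. \<Union>(set L)) Pb)))" .
    have "\<Union>(set (map (\<lambda>L. \<Union>(set L)) Pb)) = \<Union>(set (concat Pb))" by auto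
    then show ?thesis using 1 2 by simp
  qed
qed


lemma umass:
  assumes fin: "finite M" and ms: "multi_separation_strategyproof M \<phi>"
    and C: "map (\<lambda>L. \<Union>(set L)) Ls = C" and F: "concat Ls = F"
    and dj: "disj C" and djL: "\<forall>L\<in>set Ls. disj L" and un: "\<Union>(set F) = M"
    and UM: "U \<subseteq> M"
  shows "(\<forall>L\<in>set Ls. \<exists>E1 E2. L = E1 @ E2 \<and> U \<inter> \<Union>(set L) = \<Union>(set E1)) \<Longrightarrow>
           sum (\<phi> (pref_of_list C)) U \<le> sum (\<phi> (pref_of_list F)) U"
    and "(\<forall>L\<in>set Ls. \<exists>E1 E2. L = E1 @ E2 \<and> \<Union>(set L) - U = \<Union>(set E1)) \<Longrightarrow>
           sum (\<phi> (pref_of_list F)) U \<le> sum (\<phi> (pref_of_list C)) U"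
proof -
  let ?c = "\<phi> (pref_of_list C)" and ?f = "\<phi> (pref_of_list F)"
  note bf = block_facts[OF fin ms C F dj djL un]
  have djC: "disj (map (\<lambda>L. \<Union>(set L)) Ls)" using C dj by simp
  have sub: "\<Union>(set (concat Pb)) \<subseteq> M" if "Ls = Pb @ Qb" for Pb Qb
    using that F un by auto
  have subL: "\<Union>(set L) \<subseteq> M" if "L \<in> set Ls" for L
    using that F un by auto
  have UMeq: "U \<inter> \<Union>(set (concat Ls)) = U" using UM F un by auto
  have finS: "finite A" if "A \<subseteq> M" for A using fin that finite_subset by blast
  show "sum ?c U \<le> sum ?f U"
    if hyp: "\<forall>L\<in>set Ls. \<exists>E1 E2. L = E1 @ E2 \<and> U \<inter> \<Union>(set L) = \<Union>(set E1)"
  proof -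
    have "\<forall>Qb. Ls = Pb @ Qb \<longrightarrow> sum ?c (U \<inter> \<Union>(set (concat Pb))) \<le> sum ?f (U \<inter> \<Union>(set (concat Pb)))" for Pb
    proof (induction Pb rule: rev_induct)
      case Nil
      then show ?case by simp
    next
      case (snoc L Pb0)
      show ?case
      proof (intro allI impI)
        fix Qb assume "Ls = (Pb0 @ [L]) @ Qb"
        then have ls: "Ls = Pb0 @ L # Qb" by simp
        then have Lin: "L \<in> set Ls" by simp
        then obtain E1 E2 where E: "L = E1 @ E2" "U \<inter> \<Union>(set L) = \<Union>(set E1)" using hyp by blast
        define B where "B = \<Union>(set (concat Pb0))"
        have BM: "B \<subseteq> M" unfolding B_def using sub[of Pb0 "L # Qb"] ls by simp
        have E1M: "\<Union>(set E1) \<subseteq> M" using subL[OF Lin] E by auto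
        have dBL: "B \<inter> \<Union>(set L) = {}"
          using djC unfolding ls B_def by (simp; blast)
        have dBE: "B \<inter> \<Union>(set E1) = {}" using dBL E by auto
        have eqU: "U \<inter> \<Union>(set (concat (Pb0 @ [L]))) = (U \<inter> B) \<union> \<Union>(set E1)"
          using E unfolding B_def by auto
        have s1: "sum x ((U \<inter> B) \<union> \<Union>(set E1)) = sum x (U \<inter> B) + sum x (\<Union>(set E1))" for x :: "'a \<Rightarrow> real"
          by (rule sum.union_disjoint) (use BM E1M finS dBE in auto)
        have s2: "sum x (B \<union> \<Union>(set E1)) = sum x B + sum x (\<Union>(set E1))" for x :: "'a \<Rightarrow> real"
          by (rule sum.union_disjoint) (use BM E1M finS dBE in auto)
        have a1: "sum ?c (B \<union> \<Union>(set E1)) \<le> sum ?f (B \<union> \<Union>(set E1))"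
          using bf(1)[OF ls E(1)] unfolding B_def .
        have a2: "sum ?c B = sum ?f B" using bf(2)[of Pb0 "L # Qb"] ls unfolding B_def by simp
        have a3: "sum ?c (U \<inter> B) \<le> sum ?f (U \<inter> B)" using snoc.IH ls unfolding B_def by simp
        show "sum ?c (U \<inter> \<Union>(set (concat (Pb0 @ [L])))) \<le> sum ?f (U \<inter> \<Union>(set (concat (Pb0 @ [L]))))"
          unfolding eqU s1 using a1 a2 a3 unfolding s2 by linarith
      qed
    qed
    from this[of Ls] show ?thesis using UMeq by simp
  qed
  show "sum ?f U \<le> sum ?c U"
    if hyp: "\<forall>L\<in>set Ls. \<exists>E1 E2. L = E1 @ E2 \<and> \<Union>(set L) - U = \<Union>(set E1)"
  proof -
    have "\<forall>Qb. Ls = Pb @ Qb \<longrightarrow> sum ?f (U \<inter> \<Union>(set (concat Pb))) \<le> sum ?c (U \<inter> \<Union>(set (concat Pb)))" for Pb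
    proof (induction Pb rule: rev_induct)
      case Nil
      then show ?case by simp
    next
      case (snoc L Pb0)
      show ?case
      proof (intro allI impI)
        fix Qb assume "Ls = (Pb0 @ [L]) @ Qb"
        then have ls: "Ls = Pb0 @ L # Qb" and ls2: "Ls = (Pb0 @ [L]) @ Qb" by simp_all
        then have Lin: "L \<in> set Ls" by simp
        then obtain E1 E2 where E: "L = E1 @ E2" "\<Union>(set L) - U = \<Union>(set E1)" using hyp by blast
        define B where "B = \<Union>(set (concat Pb0))"
        define N where "N = \<Union>(set L)"
        have BM: "B \<subseteq> M" unfolding B_def using sub[of Pb0 "L # Qb"] ls by simp
        have NM: "N \<subseteq> M" using subL[OF Lin] unfolding N_def .
        have E1N: "\<Union>(set E1) \<subseteq> N" using E unfolding N_def by auto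
        have dBL: "B \<inter> N = {}"
          using djC unfolding ls B_def N_def by (simp; blast)
        have eqU: "U \<inter> \<Union>(set (concat (Pb0 @ [L]))) = (U \<inter> B) \<union> (N - \<Union>(set E1))"
          using E unfolding B_def N_def by auto
        have s1: "sum x ((U \<inter> B) \<union> (N - \<Union>(set E1))) = sum x (U \<inter> B) + sum x (N - \<Union>(set E1))" for x :: "'a \<Rightarrow> real"
          by (rule sum.union_disjoint) (use BM NM finS dBL in auto)
        have s2: "sum x (B \<union> \<Union>(set E1)) = sum x B + sum x (\<Union>(set E1))" for x :: "'a \<Rightarrow> real"
          by (rule sum.union_disjoint) (use BM NM E1N finS dBL in auto)
        have s3: "sum x (B \<union> N) = sum x B + sum x N" for x :: "'a \<Rightarrow> real"
          by (rule sum.union_disjoint) (use BM NM finS dBL in auto)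
        have s4: "sum x N = sum x (\<Union>(set E1)) + sum x (N - \<Union>(set E1))" for x :: "'a \<Rightarrow> real"
        proof -
          have "N = \<Union>(set E1) \<union> (N - \<Union>(set E1))" using E1N by auto
          then have "sum x N = sum x (\<Union>(set E1) \<union> (N - \<Union>(set E1)))" by simp
          also have "\<dots> = sum x (\<Union>(set E1)) + sum x (N - \<Union>(set E1))"
            by (rule sum.union_disjoint) (use NM E1N finS in auto)
          finally show ?thesis .
        qed
        have a1: "sum ?c (B \<union> \<Union>(set E1)) \<le> sum ?f (B \<union> \<Union>(set E1))"
          using bf(1)[OF ls E(1)] unfolding B_def .
        have a2: "sum ?c (B \<union> N) = sum ?f (B \<union> N)" using bf(2)[OF ls2] unfolding B_def N_def by simp
        have a3: "sum ?f (U \<inter> B) \<le> sum ?c (U \<inter> B)" using snoc.IH ls unfolding B_def by simp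
        show "sum ?f (U \<inter> \<Union>(set (concat (Pb0 @ [L])))) \<le> sum ?c (U \<inter> \<Union>(set (concat (Pb0 @ [L]))))"
          unfolding eqU s1 using a1 a2 a3 unfolding s2 s3 s4 by linarith
      qed
    qed
    from this[of Ls] show ?thesis using UMeq by simp
  qed
qed


lemma map_single: "map (\<lambda>L. \<Union>(set L)) (map (\<lambda>E. [E]) S) = S"
  by (induction S) auto

lemma concat_single: "concat (map (\<lambda>E. [E]) S) = S"
  by (induction S) auto

lemma pure1:
  assumes "\<forall>E\<in>set S. E \<subseteq> U \<or> E \<inter> U = {}"
  shows "\<forall>L\<in>set (map (\<lambda>E. [E]) S). \<exists>E1 E2. L = E1 @ E2 \<and> U \<inter> \<Union>(set L) = \<Union>(set E1)"
proof
  fix L assume "L \<in> set (map (\<lambda>E. [E]) S)"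
  then obtain E where E: "E \<in> set S" "L = [E]" by auto
  show "\<exists>E1 E2. L = E1 @ E2 \<and> U \<inter> \<Union>(set L) = \<Union>(set E1)"
  proof (cases "E \<subseteq> U")
    case True
    then show ?thesis using E by (intro exI[of _ "[E]"] exI[of _ "[]"]) auto
  next
    case False
    then show ?thesis using E assms by (intro exI[of _ "[]"] exI[of _ "[E]"]) auto
  qed
qed

lemma pure2:
  assumes "\<forall>E\<in>set S. E \<subseteq> U \<or> E \<inter> U = {}"
  shows "\<forall>L\<in>set (map (\<lambda>E. [E]) S). \<exists>E1 E2. L = E1 @ E2 \<and> \<Union>(set L) - U = \<Union>(set E1)"
proof
  fix L assume "L \<in> set (map (\<lambda>E. [E]) S)"
  then obtain E where E: "E \<in> set S" "L = [E]" by auto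
  show "\<exists>E1 E2. L = E1 @ E2 \<and> \<Union>(set L) - U = \<Union>(set E1)"
  proof (cases "E \<subseteq> U")
    case True
    then show ?thesis using E by (intro exI[of _ "[]"] exI[of _ "[E]"]) auto
  next
    case False
    then show ?thesis using E assms by (intro exI[of _ "[E]"] exI[of _ "[]"]) auto
  qed
qed

lemma chain:
  assumes fin: "finite M" and ms: "multi_separation_strategyproof M \<phi>" and UM: "U \<subseteq> M"
  shows "\<forall>E\<in>set S. E \<subseteq> U \<or> E \<inter> U = {} \<Longrightarrow> Up \<subseteq> U \<Longrightarrow> Vp \<inter> U = {} \<Longrightarrow>
    disj (Up # Vp # S) \<Longrightarrow> Up \<union> Vp \<union> \<Union>(set S) = M \<Longrightarrow>
    sum (\<phi> (pref_of_list (Up # Vp # S))) U \<le> sum (\<phi> (pref_of_list [U, M - U])) U"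
proof (induction S arbitrary: Up Vp)
  case Nil
  then have "Up = U" "Vp = M - U" using UM by auto
  then show ?case by simp
next
  case (Cons D S)
  have pS: "\<forall>E\<in>set S. E \<subseteq> U \<or> E \<inter> U = {}" using Cons.prems(1) by simp
  have djS: "disj S" using Cons.prems(4) by simp
  note p1 = pure1[OF pS] and p2 = pure2[OF pS]
  let ?sg = "map (\<lambda>E. [E]) S"
  have djsg: "\<forall>L\<in>set ?sg. disj L" by auto
  have step1: "sum (\<phi> (pref_of_list (Up # Vp # D # S))) U \<le> sum (\<phi> (pref_of_list (Up # (Vp \<union> D) # S))) U"
  proof (rule umass(2)[OF fin ms _ _ _ _ _ UM, of "[Up] # [Vp, D] # ?sg"])
    show "map (\<lambda>L. \<Union>(set L)) ([Up] # [Vp, D] # ?sg) = Up # (Vp \<union> D) # S"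
      by (simp add: o_def)
    show "concat ([Up] # [Vp, D] # ?sg) = Up # Vp # D # S" by (simp add: concat_single)
    show "disj (Up # (Vp \<union> D) # S)" using Cons.prems(4) by auto
    show "\<forall>L\<in>set ([Up] # [Vp, D] # ?sg). disj L" using Cons.prems(4) by auto
    show "\<Union>(set (Up # Vp # D # S)) = M" using Cons.prems(5) by auto
    show "\<forall>L\<in>set ([Up] # [Vp, D] # ?sg). \<exists>E1 E2. L = E1 @ E2 \<and> \<Union>(set L) - U = \<Union>(set E1)"
    proof -
      have "\<exists>E1 E2. [Up] = E1 @ E2 \<and> \<Union>(set [Up]) - U = \<Union>(set E1)"
        using Cons.prems(2) by (intro exI[of _ "[]"] exI[of _ "[Up]"]) auto
      moreover have "\<exists>E1 E2. [Vp, D] = E1 @ E2 \<and> \<Union>(set [Vp, D]) - U = \<Union>(set E1)"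
      proof (cases "D \<subseteq> U")
        case True
        then show ?thesis using Cons.prems(3) by (intro exI[of _ "[Vp]"] exI[of _ "[D]"]) auto
      next
        case False
        then have "D \<inter> U = {}" using Cons.prems(1) by auto
        then show ?thesis using Cons.prems(3) by (intro exI[of _ "[Vp, D]"] exI[of _ "[]"]) auto
      qed
      ultimately show ?thesis using p2 by auto
    qed
  qed
  show ?case
  proof (cases "D \<subseteq> U")
    case False
    then have DU: "D \<inter> U = {}" using Cons.prems(1) by auto
    have "sum (\<phi> (pref_of_list (Up # (Vp \<union> D) # S))) U \<le> sum (\<phi> (pref_of_list [U, M - U])) U"
    proof (rule Cons.IH[OF pS Cons.prems(2)])
      show "(Vp \<union> D) \<inter> U = {}" using Cons.prems(3) DU by auto
      show "disj (Up # (Vp \<union> D) # S)" using Cons.prems(4) by auto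
      show "Up \<union> (Vp \<union> D) \<union> \<Union>(set S) = M" using Cons.prems(5) by auto
    qed
    then show ?thesis using step1 by linarith
  next
    case True
    have step2: "sum (\<phi> (pref_of_list (Up # (Vp \<union> D) # S))) U \<le> sum (\<phi> (pref_of_list (Up # D # Vp # S))) U"
    proof (rule umass(1)[OF fin ms _ _ _ _ _ UM, of "[Up] # [D, Vp] # ?sg"])
      show "map (\<lambda>L. \<Union>(set L)) ([Up] # [D, Vp] # ?sg) = Up # (Vp \<union> D) # S"
        by (simp add: o_def Un_commute)
      show "concat ([Up] # [D, Vp] # ?sg) = Up # D # Vp # S" by (simp add: concat_single)
      show "disj (Up # (Vp \<union> D) # S)" using Cons.prems(4) by auto
      show "\<forall>L\<in>set ([Up] # [D, Vp] # ?sg). disj L" using Cons.prems(4) by auto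
      show "\<Union>(set (Up # D # Vp # S)) = M" using Cons.prems(5) by auto
      show "\<forall>L\<in>set ([Up] # [D, Vp] # ?sg). \<exists>E1 E2. L = E1 @ E2 \<and> U \<inter> \<Union>(set L) = \<Union>(set E1)"
      proof -
        have "\<exists>E1 E2. [Up] = E1 @ E2 \<and> U \<inter> \<Union>(set [Up]) = \<Union>(set E1)"
          using Cons.prems(2) by (intro exI[of _ "[Up]"] exI[of _ "[]"]) auto
        moreover have "\<exists>E1 E2. [D, Vp] = E1 @ E2 \<and> U \<inter> \<Union>(set [D, Vp]) = \<Union>(set E1)"
          using True Cons.prems(3) by (intro exI[of _ "[D]"] exI[of _ "[Vp]"]) auto
        ultimately show ?thesis using p1 by auto
      qed
    qed
    have step3: "sum (\<phi> (pref_of_list (Up # D # Vp # S))) U \<le> sum (\<phi> (pref_of_list ((Up \<union> D) # Vp # S))) U"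
    proof (rule umass(2)[OF fin ms _ _ _ _ _ UM, of "[Up, D] # [Vp] # ?sg"])
      show "map (\<lambda>L. \<Union>(set L)) ([Up, D] # [Vp] # ?sg) = (Up \<union> D) # Vp # S"
        by (simp add: o_def)
      show "concat ([Up, D] # [Vp] # ?sg) = Up # D # Vp # S" by (simp add: concat_single)
      show "disj ((Up \<union> D) # Vp # S)" using Cons.prems(4) by auto
      show "\<forall>L\<in>set ([Up, D] # [Vp] # ?sg). disj L" using Cons.prems(4) by auto
      show "\<Union>(set (Up # D # Vp # S)) = M" using Cons.prems(5) by auto
      show "\<forall>L\<in>set ([Up, D] # [Vp] # ?sg). \<exists>E1 E2. L = E1 @ E2 \<and> \<Union>(set L) - U = \<Union>(set E1)"
      proof -
        have "\<exists>E1 E2. [Up, D] = E1 @ E2 \<and> \<Union>(set [Up, D]) - U = \<Union>(set E1)"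
          using True Cons.prems(2) by (intro exI[of _ "[]"] exI[of _ "[Up, D]"]) auto
        moreover have "\<exists>E1 E2. [Vp] = E1 @ E2 \<and> \<Union>(set [Vp]) - U = \<Union>(set E1)"
          using Cons.prems(3) by (intro exI[of _ "[Vp]"] exI[of _ "[]"]) auto
        ultimately show ?thesis using p2 by auto
      qed
    qed
    have "sum (\<phi> (pref_of_list ((Up \<union> D) # Vp # S))) U \<le> sum (\<phi> (pref_of_list [U, M - U])) U"
    proof (rule Cons.IH[OF pS _ Cons.prems(3)])
      show "Up \<union> D \<subseteq> U" using Cons.prems(2) True by auto
      show "disj ((Up \<union> D) # Vp # S)" using Cons.prems(4) by auto
      show "(Up \<union> D) \<union> Vp \<union> \<Union>(set S) = M" using Cons.prems(5) by auto
    qed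
    then show ?thesis using step1 step2 step3 by linarith
  qed
qed


lemma top_exists:
  assumes "finite A" "A \<noteq> {}" "A \<subseteq> M" "preference M R"
  shows "\<exists>a\<in>A. \<forall>b\<in>A. (a, b) \<in> R"
  using assms
proof (induction A rule: finite_ne_induct)
  case (singleton x)
  then show ?case unfolding preference_def by auto
next
  case (insert x F)
  then obtain a where a: "a \<in> F" "\<forall>b\<in>F. (a, b) \<in> R" by auto
  have tr: "trans R" and cp: "\<forall>a\<in>M. \<forall>b\<in>M. (a, b) \<in> R \<or> (b, a) \<in> R"
    using insert.prems unfolding preference_def by auto
  have xM: "x \<in> M" "a \<in> M" using insert.prems a by auto
  show ?case
  proof (cases "(a, x) \<in> R")
    case True
    then show ?thesis using a by auto
  next
    case False
    then have "(x, a) \<in> R" using cp xM by blast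
    then have "\<forall>b\<in>insert x F. (x, b) \<in> R"
      using a tr cp xM unfolding trans_def by blast
    then show ?thesis by blast
  qed
qed

lemma repr:
  assumes "finite M" "preference M R"
  shows "\<exists>Ms. disj Ms \<and> \<Union>(set Ms) = M \<and> R = pref_of_list Ms"
  using assms
proof (induction M arbitrary: R rule: finite_psubset_induct)
  case (psubset M)
  show ?case
  proof (cases "M = {}")
    case True
    then have "R = {}" using psubset.prems unfolding preference_def by auto
    then show ?thesis using True by (intro exI[of _ "[]"]) auto
  next
    case False
    define T where "T = {a \<in> M. \<forall>b\<in>M. (a, b) \<in> R}"
    have RM: "R \<subseteq> M \<times> M" and tr: "trans R"
      using psubset.prems unfolding preference_def by auto
    obtain a where "a \<in> T" using top_exists[OF psubset.hyps(1) False subset_refl psubset.prems]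
      unfolding T_def by auto
    then have sub: "M - T \<subset> M" unfolding T_def by auto
    define R' where "R' = R \<inter> ((M - T) \<times> (M - T))"
    have "preference (M - T) R'"
      using psubset.prems unfolding preference_def R'_def trans_def by blast
    then obtain Ns where Ns: "disj Ns" "\<Union>(set Ns) = M - T" "R' = pref_of_list Ns"
      using psubset.IH[OF sub] by blast
    have "R = pref_of_list (T # Ns)"
    proof -
      have "pref_of_list (T # Ns) = T \<times> M \<union> R'"
        unfolding pref_Cons Ns(2) Ns(3)[symmetric] T_def by auto
      also have "\<dots> = R"
      proof
        show "T \<times> M \<union> R' \<subseteq> R" unfolding T_def R'_def by auto
        show "R \<subseteq> T \<times> M \<union> R'"
        proof
          fix p assume p: "p \<in> R"
          then obtain x y where xy: "p = (x, y)" "x \<in> M" "y \<in> M" using RM by auto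
          show "p \<in> T \<times> M \<union> R'"
          proof (cases "x \<in> T")
            case True
            then show ?thesis using xy by auto
          next
            case False
            have "y \<notin> T"
            proof
              assume "y \<in> T"
              then have "\<forall>b\<in>M. (x, b) \<in> R" using p xy tr unfolding T_def trans_def by blast
              then show False using False xy unfolding T_def by auto
            qed
            then show ?thesis using False xy p unfolding R'_def by auto
          qed
        qed
      qed
      finally show ?thesis by simp
    qed
    moreover have "disj (T # Ns)" using Ns by auto
    moreover have "\<Union>(set (T # Ns)) = M" using Ns T_def by auto
    ultimately show ?thesis by blast
  qed
qed

theorem lemma8:
  fixes M :: "'a set" and \<phi> :: "'a rel \<Rightarrow> ('a \<Rightarrow> real)"
  assumes "finite M"
    and "\<forall>R\<in>prefs M. \<phi> R \<in> lotteries M"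
    and "multi_separation_strategyproof M \<phi>"
  shows "strategyproof M \<phi>"
  unfolding strategyproof_def
proof (intro ballI)
  fix R R' assume R: "R \<in> prefs M" and R': "R' \<in> prefs M"
  obtain Ms where Ms: "disj Ms" "\<Union>(set Ms) = M" "R = pref_of_list Ms"
    using repr[OF assms(1)] R unfolding prefs_def by blast
  obtain Ns where Ns: "disj Ns" "\<Union>(set Ns) = M" "R' = pref_of_list Ns"
    using repr[OF assms(1)] R' unfolding prefs_def by blast
  show "sd_dom M R (\<phi> R) (\<phi> R')"
    unfolding sd_dom_def
  proof
    fix a assume aM: "a \<in> M"
    then obtain D where D: "D \<in> set Ms" "a \<in> D" using Ms(2) by auto
    then obtain P Q where PQ: "Ms = P @ D # Q" using split_list by metis
    define U where "U = \<Union>(set P) \<union> D"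
    have Ueq: "{j \<in> M. (j, a) \<in> R} = U"
    proof -
      have "{j \<in> M. (j, a) \<in> R} = M \<inter> {j. (j, a) \<in> pref_of_list (P @ D # Q)}" using Ms(3) PQ by auto
      also have "\<dots> = U" using upper[of P D Q a] Ms(1,2) PQ D(2) unfolding U_def by auto
      finally show ?thesis .
    qed
    have UM: "U \<subseteq> M" using Ms(2) PQ unfolding U_def by auto
    have QU: "\<Union>(set Q) = M - U" using Ms(1,2) PQ unfolding U_def by auto
    \<comment> \<open>step 1: R is at least as good as the two-class order\<close>
    have g1: "sum (\<phi> (pref_of_list [U, M - U])) U \<le> sum (\<phi> (pref_of_list Ms)) U"
    proof (rule umass(1)[OF assms(1,3) _ _ _ _ _ UM, of "[P @ [D], Q]"])
      show "map (\<lambda>L. \<Union>(set L)) [P @ [D], Q] = [U, M - U]" using QU unfolding U_def by auto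
      show "concat [P @ [D], Q] = Ms" using PQ by simp
      show "disj [U, M - U]" by auto
      show "\<forall>L\<in>set [P @ [D], Q]. disj L" using Ms(1) PQ by auto
      show "\<Union>(set Ms) = M" by (rule Ms(2))
      show "\<forall>L\<in>set [P @ [D], Q]. \<exists>E1 E2. L = E1 @ E2 \<and> U \<inter> \<Union>(set L) = \<Union>(set E1)"
      proof -
        have "\<exists>E1 E2. P @ [D] = E1 @ E2 \<and> U \<inter> \<Union>(set (P @ [D])) = \<Union>(set E1)"
          unfolding U_def by (intro exI[of _ "P @ [D]"] exI[of _ "[]"]) auto
        moreover have "\<exists>E1 E2. Q = E1 @ E2 \<and> U \<inter> \<Union>(set Q) = \<Union>(set E1)"
          using QU by (intro exI[of _ "[]"] exI[of _ Q]) auto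
        ultimately show ?thesis by auto
      qed
    qed
    \<comment> \<open>step 2: purify R'\<close>
    define Ls where "Ls = map (\<lambda>N. [N \<inter> U, N - U]) Ns"
    define S0 where "S0 = concat Ls"
    have mapLs: "map (\<lambda>L. \<Union>(set L)) Ls = Ns" unfolding Ls_def by (induction Ns) auto
    have djLs: "\<forall>L\<in>set Ls. disj L" unfolding Ls_def by auto
    have unS0: "\<Union>(set S0) = M" unfolding S0_def Ls_def using Ns(2) by auto
    have djS0: "disj S0" unfolding S0_def using disj_concat[of Ls] mapLs djLs Ns(1) by simp
    have pureS0: "\<forall>E\<in>set S0. E \<subseteq> U \<or> E \<inter> U = {}" unfolding S0_def Ls_def by auto
    have g2: "sum (\<phi> (pref_of_list Ns)) U \<le> sum (\<phi> (pref_of_list S0)) U"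
    proof (rule umass(1)[OF assms(1,3) mapLs S0_def[symmetric] Ns(1) djLs unS0 UM])
      show "\<forall>L\<in>set Ls. \<exists>E1 E2. L = E1 @ E2 \<and> U \<inter> \<Union>(set L) = \<Union>(set E1)"
      proof
        fix L assume "L \<in> set Ls"
        then obtain N where "L = [N \<inter> U, N - U]" unfolding Ls_def by auto
        then show "\<exists>E1 E2. L = E1 @ E2 \<and> U \<inter> \<Union>(set L) = \<Union>(set E1)"
          by (intro exI[of _ "[N \<inter> U]"] exI[of _ "[N - U]"]) auto
      qed
    qed
    \<comment> \<open>step 3: sort\<close>
    have g3: "sum (\<phi> (pref_of_list ({} # {} # S0))) U \<le> sum (\<phi> (pref_of_list [U, M - U])) U"
      using chain[OF assms(1,3) UM pureS0] djS0 unS0 by auto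
    have "pref_of_list ({} # {} # S0) = pref_of_list S0" by (simp add: pref_Cons)
    then have "sum (\<phi> R') U \<le> sum (\<phi> R) U" using g1 g2 g3 Ms(3) Ns(3) by simp
    then show "sum (\<phi> R') {j \<in> M. (j, a) \<in> R} \<le> sum (\<phi> R) {j \<in> M. (j, a) \<in> R}"
      unfolding Ueq .
  qed
qed

end
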